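(* For $k\geq 1$ let $p(k)$ be the probability that two independent uniformly random permutations $\sigma,\sigma'\in S_{2k}$, each of cycle type $(2^k)$ (i.e. fixed-point-free involutions), generate a transitive subgroup of $S_{2k}$. Then $p(k)\asymp k^{-1/2}$, i.e. there are absolute constants $0<a<b$ with $a k^{-1/2}\leq p(k)\leq b k^{-1/2}$ for all $k\geq 1$. *)

theory Defs
  imports "HOL-Combinatorics.Permutations" Complex_Main
begin

definition fpf_involutions :: "nat \<Rightarrow> (nat \<Rightarrow> nat) set" where
  "fpf_involutions n = {s. s permutes {0..<n} \<and> (\<forall>i<n. s i \<noteq> i \<and> s (s i) = i)}"

inductive_set generated_group :: "(nat \<Rightarrow> nat) set \<Rightarrow> (nat \<Rightarrow> nat) set"
  for S :: "(nat \<Rightarrow> nat) set" where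
  gen_id: "id \<in> generated_group S"
| gen_mult: "g \<in> generated_group S \<Longrightarrow> s \<in> S \<Longrightarrow> s \<circ> g \<in> generated_group S"
| gen_inv: "g \<in> generated_group S \<Longrightarrow> s \<in> S \<Longrightarrow> inv s \<circ> g \<in> generated_group S"

definition transitive_on :: "nat \<Rightarrow> (nat \<Rightarrow> nat) set \<Rightarrow> bool" where
  "transitive_on n G \<longleftrightarrow> (\<forall>i<n. \<forall>j<n. \<exists>g\<in>G. g i = j)"

definition p_trans :: "nat \<Rightarrow> real" where
  "p_trans k = real (card {(s, t). s \<in> fpf_involutions (2*k) \<and> t \<in> fpf_involutions (2*k)
        \<and> transitive_on (2*k) (generated_group {s, t})})
     / (real (card (fpf_involutions (2*k)))) ^ 2"

end

theory Submission
  imports Defs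
begin


definition FI :: "nat set \<Rightarrow> (nat \<Rightarrow> nat) set" where
  "FI A = {s. s permutes A \<and> (\<forall>x\<in>A. s x \<noteq> x \<and> s (s x) = x)}"

lemma FI_iff: "s \<in> FI A \<longleftrightarrow> (\<forall>x. x \<notin> A \<longrightarrow> s x = x) \<and> (\<forall>x\<in>A. s x \<noteq> x) \<and> (\<forall>x. s (s x) = x)"
proof
  assume "s \<in> FI A"
  then have p: "s permutes A" and h: "\<forall>x\<in>A. s x \<noteq> x \<and> s (s x) = x" by (auto simp: FI_def)
  have o: "\<forall>x. x \<notin> A \<longrightarrow> s x = x" using p permutes_not_in by metis
  show "(\<forall>x. x \<notin> A \<longrightarrow> s x = x) \<and> (\<forall>x\<in>A. s x \<noteq> x) \<and> (\<forall>x. s (s x) = x)"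
    using o h by metis
next
  assume h: "(\<forall>x. x \<notin> A \<longrightarrow> s x = x) \<and> (\<forall>x\<in>A. s x \<noteq> x) \<and> (\<forall>x. s (s x) = x)"
  have "s permutes A" unfolding permutes_def
  proof (intro conjI allI impI)
    fix y show "\<exists>!x. s x = y" using h by metis
  qed (use h in auto)
  then show "s \<in> FI A" using h by (auto simp: FI_def)
qed

lemma FI_in: "s \<in> FI A \<Longrightarrow> x \<in> A \<Longrightarrow> s x \<in> A"
  unfolding FI_iff by metis

fun ff :: "nat \<Rightarrow> nat" where
  "ff 0 = 1" | "ff (Suc k) = (2*k+1) * ff k"

lemma ff_pos: "ff k > 0" by (induction k) auto

lemma FI_restr:
  assumes s: "s \<in> FI A" and m: "m \<in> A"
  shows "(\<lambda>x. if x = m \<or> x = s m then x else s x) \<in> FI (A - {m, s m})"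
proof -
  have o: "\<forall>x. x \<notin> A \<longrightarrow> s x = x" and n: "\<forall>x\<in>A. s x \<noteq> x" and i: "\<forall>x. s (s x) = x"
    using s unfolding FI_iff by auto
  show ?thesis unfolding FI_iff
  proof (intro conjI allI ballI impI)
    fix x assume "x \<notin> A - {m, s m}" then show "(if x = m \<or> x = s m then x else s x) = x"
      using o by auto
  next
    fix x assume "x \<in> A - {m, s m}" then show "(if x = m \<or> x = s m then x else s x) \<noteq> x"
      using n by auto
  next
    fix x show "(\<lambda>x. if x = m \<or> x = s m then x else s x) ((\<lambda>x. if x = m \<or> x = s m then x else s x) x) = x"
      using i by (cases "x = m \<or> x = s m") (auto, metis+)
  qed
qed

lemma FI_ext:
  assumes s: "s' \<in> FI (A - {m,a})" and m: "m \<in> A" "a \<in> A" "a \<noteq> m"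
  shows "s'(m := a, a := m) \<in> FI A"
proof -
  have o: "\<forall>x. x \<notin> A - {m,a} \<longrightarrow> s' x = x" and n: "\<forall>x\<in>A - {m,a}. s' x \<noteq> x" and i: "\<forall>x. s' (s' x) = x"
    using s unfolding FI_iff by auto
  have sm: "s' m = m" "s' a = a" using o by auto
  have nm: "s' x \<noteq> m" "s' x \<noteq> a" if "x \<noteq> m" "x \<noteq> a" for x
    using i sm that by metis+
  show ?thesis unfolding FI_iff
  proof (intro conjI allI ballI impI)
    fix x assume "x \<notin> A" then show "(s'(m := a, a := m)) x = x" using o m by auto
  next
    fix x assume "x \<in> A" then show "(s'(m := a, a := m)) x \<noteq> x" using n m by auto
  next
    fix x show "(s'(m := a, a := m)) ((s'(m := a, a := m)) x) = x"
      using i m nm[of x] by auto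
  qed
qed

lemma FI_bij:
  assumes "m \<in> A"
  shows "bij_betw (\<lambda>s. (s m, \<lambda>x. if x = m \<or> x = s m then x else s x)) (FI A)
           (SIGMA a:A-{m}. FI (A - {m,a}))"
proof (rule bij_betw_byWitness[where f' = "\<lambda>(a,s'). s'(m := a, a := m)"])
  show "\<forall>s\<in>FI A. (\<lambda>(a, s'). s'(m := a, a := m)) (s m, \<lambda>x. if x = m \<or> x = s m then x else s x) = s"
    by (auto simp: FI_iff fun_eq_iff)
  show "\<forall>p\<in>(SIGMA a:A-{m}. FI (A - {m,a})). (\<lambda>s. (s m, \<lambda>x. if x = m \<or> x = s m then x else s x)) ((\<lambda>(a, s'). s'(m := a, a := m)) p) = p"
    by (auto simp: FI_iff fun_eq_iff)
  show "(\<lambda>s. (s m, \<lambda>x. if x = m \<or> x = s m then x else s x)) ` FI A \<subseteq> (SIGMA a:A-{m}. FI (A - {m,a}))"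
  proof safe
    fix s assume s: "s \<in> FI A"
    show "s m \<in> A" using FI_in[OF s assms] .
    show "s m = m \<Longrightarrow> False" using s assms by (auto simp: FI_iff)
    show "(\<lambda>x. if x = m \<or> x = s m then x else s x) \<in> FI (A - {m, s m})" using FI_restr[OF s assms] .
  qed
  show "(\<lambda>(a, s'). s'(m := a, a := m)) ` (SIGMA a:A-{m}. FI (A - {m,a})) \<subseteq> FI A"
    using assms FI_ext by auto
qed

lemma FI_card: "finite A \<Longrightarrow> card A = 2*k \<Longrightarrow> card (FI A) = ff k"
proof (induction k arbitrary: A)
  case 0
  then have "A = {}" by auto
  then have "FI A = {id}" by (auto simp: FI_iff fun_eq_iff)
  then show ?case by simp
next
  case (Suc k)
  then obtain m where m: "m \<in> A" by fastforce
  have IH: "card (FI (A - {m,a})) = ff k" if "a \<in> A - {m}" for a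
    using Suc that m by (intro Suc.IH) (auto simp: card_Diff_subset)
  have fin: "finite (FI (A - {m,a}))" if "a \<in> A - {m}" for a
    using IH[OF that] ff_pos card_ge_0_finite by metis
  have "card (FI A) = card (SIGMA a:A-{m}. FI (A - {m,a}))"
    using bij_betw_same_card[OF FI_bij[OF m]] .
  also have "\<dots> = (\<Sum>a\<in>A-{m}. ff k)" using Suc fin IH by simp
  also have "\<dots> = (2*k+1) * ff k" using Suc m by simp
  finally show ?case by simp
qed


definition RR :: "(nat \<Rightarrow> nat) \<Rightarrow> (nat \<Rightarrow> nat) \<Rightarrow> (nat \<times> nat) set" where
  "RR s t = {(x, s x) | x. True} \<union> {(x, t x) | x. True}"

lemma RR_iff[simp]: "(x, y) \<in> RR s t \<longleftrightarrow> y = s x \<or> y = t x"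
  by (auto simp: RR_def)

definition conn :: "nat set \<Rightarrow> (nat \<Rightarrow> nat) \<Rightarrow> (nat \<Rightarrow> nat) \<Rightarrow> bool" where
  "conn A s t \<longleftrightarrow> (\<forall>x\<in>A. \<forall>y\<in>A. (x, y) \<in> (RR s t)\<^sup>*)"

definition rs :: "nat \<Rightarrow> (nat \<Rightarrow> nat) \<Rightarrow> nat \<Rightarrow> nat" where
  "rs m s = (\<lambda>x. if x = m \<or> x = s m then x else s x)"
definition rt :: "nat \<Rightarrow> (nat \<Rightarrow> nat) \<Rightarrow> (nat \<Rightarrow> nat) \<Rightarrow> nat \<Rightarrow> nat" where
  "rt m s t = (\<lambda>x. if x = m \<or> x = s m then x else if x = t m then t (s m)
                   else if x = t (s m) then t m else t x)"

lemma conn_contract: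
  assumes s: "s \<in> FI A" and t: "t \<in> FI A" and m: "m \<in> A" and ne: "t m \<noteq> s m"
  shows "conn A s t \<longleftrightarrow> conn (A - {m, s m}) (rs m s) (rt m s t)"
proof -
  define a b c where "a = s m" and "b = t m" and "c = t (s m)"
  have so: "\<forall>x. x \<notin> A \<longrightarrow> s x = x" and sn: "\<forall>x\<in>A. s x \<noteq> x" and si: "\<forall>x. s (s x) = x"
    using s unfolding FI_iff by auto
  have to: "\<forall>x. x \<notin> A \<longrightarrow> t x = x" and tn: "\<forall>x\<in>A. t x \<noteq> x" and ti: "\<forall>x. t (t x) = x"
    using t unfolding FI_iff by auto
  have inA: "a \<in> A" "b \<in> A" "c \<in> A" using FI_in[OF s m] FI_in[OF t m] FI_in[OF t FI_in[OF s m]]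
    unfolding a_def b_def c_def by auto
  have d: "a \<noteq> m" "b \<noteq> m" "b \<noteq> a" "c \<noteq> a" "c \<noteq> m" "c \<noteq> b"
  proof -
    show "a \<noteq> m" using sn m unfolding a_def by auto
    show "b \<noteq> m" using tn m unfolding b_def by auto
    show "b \<noteq> a" using ne unfolding a_def b_def by auto
    show "c \<noteq> a" using tn inA(1) unfolding c_def a_def by auto
    show "c \<noteq> m" using ti ne unfolding c_def a_def b_def by metis
    show "c \<noteq> b" using ti sn m unfolding c_def a_def b_def by metis
  qed
  have e: "s a = m" "t b = m" "t c = a" "t a = c" "s m = a" "t m = b"
    using si ti unfolding a_def b_def c_def by auto
  have sx: "s x \<noteq> m" "s x \<noteq> a" if "x \<noteq> m" "x \<noteq> a" for x using that e(1,5) si by metis+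
  have tx: "t x \<noteq> m" "t x \<noteq> a" "t x \<noteq> b" "t x \<noteq> c" if "x \<noteq> m" "x \<noteq> a" "x \<noteq> b" "x \<noteq> c" for x
    using that e(2,3,4,6) ti by metis+
  have rse: "rs m s x = (if x = m \<or> x = a then x else s x)" for x unfolding rs_def a_def by simp
  have rte: "rt m s t x = (if x = m \<or> x = a then x else if x = b then c else if x = c then b else t x)" for x
    unfolding rt_def a_def b_def c_def by simp
  define \<pi> where "\<pi> x = (if x = m then b else if x = a then c else x)" for x
  have step1: "(\<pi> x, \<pi> y) \<in> (RR (rs m s) (rt m s t))\<^sup>*" if "(x, y) \<in> RR s t" for x y
  proof -
    have "y = s x \<or> y = t x" using that by simp
    then show ?thesis
    proof
      assume 1: "y = s x"
      show ?thesis
      proof (cases "x = m \<or> x = a")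
        case True
        then show ?thesis using 1 d e rte unfolding \<pi>_def
          by (auto intro!: r_into_rtrancl)
      next
        case False
        then show ?thesis using 1 d e rse sx[of x] unfolding \<pi>_def
          by (auto intro!: r_into_rtrancl)
      qed
    next
      assume 2: "y = t x"
      show ?thesis
      proof (cases "x = m \<or> x = a \<or> x = b \<or> x = c")
        case True
        then show ?thesis using 2 d e unfolding \<pi>_def by auto
      next
        case False
        then show ?thesis using 2 d e rte tx[of x] unfolding \<pi>_def
          by (auto intro!: r_into_rtrancl)
      qed
    qed
  qed
  have star1: "(\<pi> x, \<pi> y) \<in> (RR (rs m s) (rt m s t))\<^sup>*" if "(x, y) \<in> (RR s t)\<^sup>*" for x y
    using that
  proof (induction rule: rtrancl_induct)
    case base then show ?case by simp
  next
    case (step y z) then show ?case using step1 rtrancl_trans by metis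
  qed
  have step2: "(x, y) \<in> (RR s t)\<^sup>*" if "(x, y) \<in> RR (rs m s) (rt m s t)" for x y
  proof -
    have "y = rs m s x \<or> y = rt m s t x" using that by simp
    then show ?thesis
    proof
      assume 1: "y = rs m s x" then show ?thesis using rse by (auto intro!: r_into_rtrancl)
    next
      assume 2: "y = rt m s t x"
      have bc: "(b, c) \<in> (RR s t)\<^sup>*"
      proof -
        have "(b, m) \<in> RR s t" "(m, a) \<in> RR s t" "(a, c) \<in> RR s t" using e by auto
        then show ?thesis by (meson rtrancl.rtrancl_into_rtrancl r_into_rtrancl)
      qed
      have cb: "(c, b) \<in> (RR s t)\<^sup>*"
      proof -
        have "(c, a) \<in> RR s t" "(a, m) \<in> RR s t" "(m, b) \<in> RR s t" using e by auto
        then show ?thesis by (meson rtrancl.rtrancl_into_rtrancl r_into_rtrancl)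
      qed
      show ?thesis using 2 rte bc cb by (auto intro!: r_into_rtrancl)
    qed
  qed
  have star2: "(x, y) \<in> (RR s t)\<^sup>*" if "(x, y) \<in> (RR (rs m s) (rt m s t))\<^sup>*" for x y
    using that
  proof (induction rule: rtrancl_induct)
    case base then show ?case by simp
  next
    case (step y z) then show ?case using step2 rtrancl_trans by metis
  qed
  have pin: "\<pi> x \<in> A - {m, s m}" if "x \<in> A" for x
    using that inA d unfolding \<pi>_def a_def[symmetric] by auto
  have xpi: "(x, \<pi> x) \<in> (RR s t)\<^sup>*" for x
    using e unfolding \<pi>_def by (auto intro!: r_into_rtrancl)
  have pix: "(\<pi> x, x) \<in> (RR s t)\<^sup>*" for x
    using e unfolding \<pi>_def by (auto intro!: r_into_rtrancl)
  have pid: "\<pi> x = x" if "x \<in> A - {m, s m}" for x using that unfolding \<pi>_def a_def by auto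
  show ?thesis
  proof
    assume "conn A s t"
    then show "conn (A - {m, s m}) (rs m s) (rt m s t)"
      unfolding conn_def using star1 pid by (metis DiffD1)
  next
    assume h: "conn (A - {m, s m}) (rs m s) (rt m s t)"
    show "conn A s t" unfolding conn_def
    proof (intro ballI)
      fix x y assume "x \<in> A" "y \<in> A"
      then have "(\<pi> x, \<pi> y) \<in> (RR s t)\<^sup>*" using h pin star2 unfolding conn_def by blast
      then show "(x, y) \<in> (RR s t)\<^sup>*" using xpi pix rtrancl_trans by metis
    qed
  qed
qed


definition es :: "nat \<Rightarrow> nat \<Rightarrow> (nat \<Rightarrow> nat) \<Rightarrow> nat \<Rightarrow> nat" where
  "es m a s' = s'(m := a, a := m)"
definition et :: "nat \<Rightarrow> nat \<Rightarrow> nat \<Rightarrow> (nat \<Rightarrow> nat) \<Rightarrow> nat \<Rightarrow> nat" where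
  "et m a b t' = t'(m := b, b := m, a := t' b, t' b := a)"

lemma rt_FI:
  assumes s: "s \<in> FI A" and t: "t \<in> FI A" and m: "m \<in> A" and ne: "t m \<noteq> s m"
  shows "rt m s t \<in> FI (A - {m, s m})"
proof -
  define a b c where "a = s m" and "b = t m" and "c = t (s m)"
  have so: "\<forall>x. x \<notin> A \<longrightarrow> s x = x" and sn: "\<forall>x\<in>A. s x \<noteq> x" and si: "\<forall>x. s (s x) = x"
    using s unfolding FI_iff by auto
  have to: "\<forall>x. x \<notin> A \<longrightarrow> t x = x" and tn: "\<forall>x\<in>A. t x \<noteq> x" and ti: "\<forall>x. t (t x) = x"
    using t unfolding FI_iff by auto
  have inA: "a \<in> A" "b \<in> A" "c \<in> A" using FI_in[OF s m] FI_in[OF t m] FI_in[OF t FI_in[OF s m]]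
    unfolding a_def b_def c_def by auto
  have d: "a \<noteq> m" "b \<noteq> m" "b \<noteq> a" "c \<noteq> a" "c \<noteq> m" "c \<noteq> b"
  proof -
    show "a \<noteq> m" using sn m unfolding a_def by auto
    show "b \<noteq> m" using tn m unfolding b_def by auto
    show "b \<noteq> a" using ne unfolding a_def b_def by auto
    show "c \<noteq> a" using tn inA(1) unfolding c_def a_def by auto
    show "c \<noteq> m" using ti ne unfolding c_def a_def b_def by metis
    show "c \<noteq> b" using ti sn m unfolding c_def a_def b_def by metis
  qed
  have e: "s a = m" "t b = m" "t c = a" "t a = c" "s m = a" "t m = b"
    using si ti unfolding a_def b_def c_def by auto
  have tx: "t x \<noteq> m" "t x \<noteq> a" "t x \<noteq> b" "t x \<noteq> c" if "x \<noteq> m" "x \<noteq> a" "x \<noteq> b" "x \<noteq> c" for x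
    using that e(2,3,4,6) ti by metis+
  have rte: "rt m s t x = (if x = m \<or> x = a then x else if x = b then c else if x = c then b else t x)" for x
    unfolding rt_def a_def b_def c_def by simp
  show ?thesis unfolding FI_iff a_def[symmetric]
  proof (intro conjI allI ballI impI)
    fix x assume x: "x \<notin> A - {m, a}"
    show "rt m s t x = x"
    proof (cases "x = m \<or> x = a")
      case True then show ?thesis using rte by simp
    next
      case False then have "x \<notin> A" using x by auto
      then show ?thesis using rte to inA by auto
    qed
  next
    fix x assume x: "x \<in> A - {m, a}"
    show "rt m s t x \<noteq> x" using rte[of x] tn x d by auto
  next
    fix x
    show "rt m s t (rt m s t x) = x"
    proof (cases "x = m \<or> x = a \<or> x = b \<or> x = c")
      case True then show ?thesis using rte d by auto
    next
      case False
      then show ?thesis using rte tx[of x] ti by auto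
    qed
  qed
qed

lemma et_FI:
  assumes t': "t' \<in> FI (A - {m, a})" and m: "m \<in> A" "a \<in> A" "a \<noteq> m" and b: "b \<in> A - {m, a}"
  shows "et m a b t' \<in> FI A"
proof -
  define c where "c = t' b"
  have o: "\<forall>x. x \<notin> A - {m,a} \<longrightarrow> t' x = x" and n: "\<forall>x\<in>A - {m,a}. t' x \<noteq> x" and i: "\<forall>x. t' (t' x) = x"
    using t' unfolding FI_iff by auto
  have cA: "c \<in> A - {m, a}" using FI_in[OF t' b] unfolding c_def .
  have cb: "c \<noteq> b" using n b unfolding c_def by auto
  have tc: "t' c = b" using i unfolding c_def by auto
  have tm: "t' m = m" "t' a = a" using o by auto
  have tx: "t' x \<noteq> m" "t' x \<noteq> a" "t' x \<noteq> b" "t' x \<noteq> c" if "x \<noteq> m" "x \<noteq> a" "x \<noteq> b" "x \<noteq> c" for x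
    using that tm tc i unfolding c_def by metis+
  have ete: "et m a b t' x = (if x = m then b else if x = b then m else if x = a then c else if x = c then a else t' x)" for x
    unfolding et_def c_def[symmetric] using m b cA cb by auto
  show ?thesis unfolding FI_iff
  proof (intro conjI allI ballI impI)
    fix x assume x: "x \<notin> A"
    then show "et m a b t' x = x" using ete[of x] o m b cA by auto
  next
    fix x assume x: "x \<in> A"
    show "et m a b t' x \<noteq> x" using ete[of x] n x m b cA cb by auto
  next
    fix x
    show "et m a b t' (et m a b t' x) = x"
    proof (cases "x = m \<or> x = a \<or> x = b \<or> x = c")
      case True then show ?thesis using ete m b cA cb by auto
    next
      case False
      then show ?thesis using ete tx[of x] i by auto
    qed
  qed
qed

lemma psi_phi:
  assumes s': "s' \<in> FI (A - {m, a})" and t': "t' \<in> FI (A - {m, a})"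
    and m: "m \<in> A" "a \<in> A" "a \<noteq> m" and b: "b \<in> A - {m, a}"
  shows "es m a s' m = a" "et m a b t' m = b" "rs m (es m a s') = s'"
    "rt m (es m a s') (et m a b t') = t'"
proof -
  define c where "c = t' b"
  have so: "\<forall>x. x \<notin> A - {m,a} \<longrightarrow> s' x = x"
    using s' unfolding FI_iff by auto
  have o: "\<forall>x. x \<notin> A - {m,a} \<longrightarrow> t' x = x" and n: "\<forall>x\<in>A - {m,a}. t' x \<noteq> x" and i: "\<forall>x. t' (t' x) = x"
    using t' unfolding FI_iff by auto
  have cA: "c \<in> A - {m, a}" using FI_in[OF t' b] unfolding c_def .
  have cb: "c \<noteq> b" using n b unfolding c_def by auto
  have tc: "t' c = b" using i unfolding c_def by auto
  have ete: "et m a b t' x = (if x = m then b else if x = b then m else if x = a then c else if x = c then a else t' x)" for x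
    unfolding et_def c_def[symmetric] using m b cA cb by auto
  show 1: "es m a s' m = a" using m unfolding es_def by auto
  show 2: "et m a b t' m = b" using ete by simp
  show "rs m (es m a s') = s'"
  proof (rule ext)
    fix x show "rs m (es m a s') x = s' x"
      unfolding rs_def 1 using so m by (cases "x = m \<or> x = a") (auto simp: es_def)
  qed
  have ea: "et m a b t' a = c" using ete m b cA cb by simp
  show "rt m (es m a s') (et m a b t') = t'"
  proof (rule ext)
    fix x
    show "rt m (es m a s') (et m a b t') x = t' x"
    proof (cases "x = m \<or> x = a")
      case True then show ?thesis using o m unfolding rt_def 1 by auto
    next
      case False
      then have "rt m (es m a s') (et m a b t') x = (if x = b then c else if x = c then b else et m a b t' x)"
        unfolding rt_def 1 2 ea by auto
      also have "\<dots> = t' x" using False ete[of x] tc cb unfolding c_def by auto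
      finally show ?thesis .
    qed
  qed
qed

lemma phi_psi:
  assumes s: "s \<in> FI A" and t: "t \<in> FI A" and m: "m \<in> A" and ne: "t m \<noteq> s m"
  shows "es m (s m) (rs m s) = s" "et m (s m) (t m) (rt m s t) = t"
proof -
  define a b c where "a = s m" and "b = t m" and "c = t (s m)"
  have sn: "\<forall>x\<in>A. s x \<noteq> x" and si: "\<forall>x. s (s x) = x"
    using s unfolding FI_iff by auto
  have tn: "\<forall>x\<in>A. t x \<noteq> x" and ti: "\<forall>x. t (t x) = x"
    using t unfolding FI_iff by auto
  have inA: "a \<in> A" using FI_in[OF s m] unfolding a_def by auto
  have d: "a \<noteq> m" "b \<noteq> m" "b \<noteq> a" "c \<noteq> a" "c \<noteq> m" "c \<noteq> b"
  proof -
    show "a \<noteq> m" using sn m unfolding a_def by auto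
    show "b \<noteq> m" using tn m unfolding b_def by auto
    show "b \<noteq> a" using ne unfolding a_def b_def by auto
    show "c \<noteq> a" using tn inA(1) unfolding c_def a_def by auto
    show "c \<noteq> m" using ti ne unfolding c_def a_def b_def by metis
    show "c \<noteq> b" using ti sn m unfolding c_def a_def b_def by metis
  qed
  have e: "s a = m" "t b = m" "t c = a" "t a = c" "s m = a" "t m = b"
    using si ti unfolding a_def b_def c_def by auto
  have rte: "rt m s t x = (if x = m \<or> x = a then x else if x = b then c else if x = c then b else t x)" for x
    unfolding rt_def a_def b_def c_def by simp
  show "es m (s m) (rs m s) = s" unfolding es_def rs_def using si by (auto simp: fun_eq_iff)
  show "et m (s m) (t m) (rt m s t) = t"
  proof (rule ext)
    fix x
    have rb: "rt m s t b = c" using rte d by simp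
    show "et m (s m) (t m) (rt m s t) x = t x"
      unfolding et_def a_def[symmetric] b_def[symmetric] rb using rte[of x] d e by auto
  qed
qed

lemma not_conn:
  assumes s: "s \<in> FI A" and t: "t \<in> FI A" and eq: "t m = s m" and x: "x \<in> A" "x \<noteq> m" "x \<noteq> s m"
    and m: "m \<in> A"
  shows "\<not> conn A s t"
proof
  assume c: "conn A s t"
  have si: "\<forall>x. s (s x) = x" using s unfolding FI_iff by auto
  have ti: "\<forall>x. t (t x) = x" using t unfolding FI_iff by auto
  have cl: "y \<in> {m, s m} \<Longrightarrow> (y, z) \<in> RR s t \<Longrightarrow> z \<in> {m, s m}" for y z
    using si ti eq by auto (metis)+
  have "z \<in> {m, s m}" if "(m, z) \<in> (RR s t)\<^sup>*" for z
    using that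
  proof (induction rule: rtrancl_induct)
    case base then show ?case by simp
  next
    case (step y z) then show ?case using cl by blast
  qed
  moreover have "(m, x) \<in> (RR s t)\<^sup>*" using c x m unfolding conn_def by auto
  ultimately show False using x by auto
qed



definition PP :: "nat set \<Rightarrow> ((nat \<Rightarrow> nat) \<times> (nat \<Rightarrow> nat)) set" where
  "PP A = {(s, t). s \<in> FI A \<and> t \<in> FI A \<and> conn A s t}"

lemma third:
  assumes "finite A" "card A \<ge> 3"
  shows "\<exists>x\<in>A. x \<noteq> m \<and> x \<noteq> y"
proof (rule ccontr)
  assume "\<not> ?thesis"
  then have "A \<subseteq> {m, y}" by auto
  then have "card A \<le> card {m, y}" by (intro card_mono) auto
  also have "\<dots> \<le> 2" by (simp add: card_insert_le_m1)
  finally show False using assms by simp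
qed

lemma PP_bij:
  assumes fin: "finite A" and m: "m \<in> A" and c3: "card A \<ge> 3"
  shows "bij_betw (\<lambda>(s,t). (s m, t m, rs m s, rt m s t)) (PP A)
           (SIGMA a:A-{m}. (A - {m,a}) \<times> PP (A - {m,a}))"
proof (rule bij_betw_byWitness[where f' = "\<lambda>(a,b,s',t'). (es m a s', et m a b t')"])
  have ne: "t m \<noteq> s m" if "(s, t) \<in> PP A" for s t
  proof
    assume eq: "t m = s m"
    obtain x where "x \<in> A" "x \<noteq> m" "x \<noteq> s m" using third[OF fin c3] by blast
    then show False using not_conn[of s A t m x] that eq m unfolding PP_def by auto
  qed
  show "\<forall>p\<in>PP A. (\<lambda>(a,b,s',t'). (es m a s', et m a b t')) ((\<lambda>(s,t). (s m, t m, rs m s, rt m s t)) p) = p"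
  proof
    fix p assume p: "p \<in> PP A"
    obtain s t where st: "p = (s, t)" by fastforce
    have "s \<in> FI A" "t \<in> FI A" "t m \<noteq> s m" using p ne unfolding st PP_def by auto
    then show "(\<lambda>(a,b,s',t'). (es m a s', et m a b t')) ((\<lambda>(s,t). (s m, t m, rs m s, rt m s t)) p) = p"
      using phi_psi[of s A t m] m unfolding st by simp
  qed
  show "\<forall>p\<in>(SIGMA a:A-{m}. (A - {m,a}) \<times> PP (A - {m,a})). (\<lambda>(s,t). (s m, t m, rs m s, rt m s t)) ((\<lambda>(a,b,s',t'). (es m a s', et m a b t')) p) = p"
  proof
    fix p assume p: "p \<in> (SIGMA a:A-{m}. (A - {m,a}) \<times> PP (A - {m,a}))"
    obtain a b s' t' where st: "p = (a, b, s', t')" by (cases p) auto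
    have h: "a \<in> A" "a \<noteq> m" "b \<in> A - {m, a}" "s' \<in> FI (A - {m,a})" "t' \<in> FI (A - {m,a})"
      using p unfolding st PP_def by auto
    show "(\<lambda>(s,t). (s m, t m, rs m s, rt m s t)) ((\<lambda>(a,b,s',t'). (es m a s', et m a b t')) p) = p"
      using psi_phi[OF h(4) h(5) m h(1) h(2) h(3)] unfolding st by simp
  qed
  show "(\<lambda>(s,t). (s m, t m, rs m s, rt m s t)) ` PP A \<subseteq> (SIGMA a:A-{m}. (A - {m,a}) \<times> PP (A - {m,a}))"
  proof
    fix q assume "q \<in> (\<lambda>(s,t). (s m, t m, rs m s, rt m s t)) ` PP A"
    then obtain s t where p: "(s, t) \<in> PP A" and q: "q = (s m, t m, rs m s, rt m s t)" by auto
    have s: "s \<in> FI A" and t: "t \<in> FI A" and c: "conn A s t" using p unfolding PP_def by auto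
    have n: "t m \<noteq> s m" using ne[OF p] .
    have 1: "s m \<in> A" "s m \<noteq> m" using FI_in[OF s m] s m unfolding FI_iff by auto
    have 2: "t m \<in> A" "t m \<noteq> m" using FI_in[OF t m] t m unfolding FI_iff by auto
    have 3: "rs m s \<in> FI (A - {m, s m})" using FI_restr[OF s m] unfolding rs_def .
    have 4: "rt m s t \<in> FI (A - {m, s m})" using rt_FI[OF s t m n] .
    have 5: "conn (A - {m, s m}) (rs m s) (rt m s t)" using conn_contract[OF s t m n] c by simp
    show "q \<in> (SIGMA a:A-{m}. (A - {m,a}) \<times> PP (A - {m,a}))"
      unfolding q PP_def using 1 2 3 4 5 n by auto
  qed
  show "(\<lambda>(a,b,s',t'). (es m a s', et m a b t')) ` (SIGMA a:A-{m}. (A - {m,a}) \<times> PP (A - {m,a})) \<subseteq> PP A"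
  proof
    fix q assume "q \<in> (\<lambda>(a,b,s',t'). (es m a s', et m a b t')) ` (SIGMA a:A-{m}. (A - {m,a}) \<times> PP (A - {m,a}))"
    then obtain a b s' t' where p: "(a, b, s', t') \<in> (SIGMA a:A-{m}. (A - {m,a}) \<times> PP (A - {m,a}))"
      and q: "q = (es m a s', et m a b t')" by auto
    have h: "a \<in> A" "a \<noteq> m" "b \<in> A - {m, a}" "s' \<in> FI (A - {m,a})" "t' \<in> FI (A - {m,a})"
      "conn (A - {m,a}) s' t'"
      using p unfolding PP_def by auto
    note pp = psi_phi[OF h(4) h(5) m h(1) h(2) h(3)]
    have s: "es m a s' \<in> FI A" using FI_ext[OF h(4) m h(1) h(2)] unfolding es_def .
    have t: "et m a b t' \<in> FI A" using et_FI[OF h(5) m h(1) h(2) h(3)] .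
    have n: "et m a b t' m \<noteq> es m a s' m" using pp h by auto
    have "conn A (es m a s') (et m a b t')"
      using conn_contract[OF s t m n] pp h(6) by simp
    then show "q \<in> PP A" unfolding q PP_def using s t by auto
  qed
qed

lemma PP_two:
  assumes "card A = 2"
  shows "card (PP A) = 1"
proof -
  obtain x y where A: "A = {x, y}" and xy: "x \<noteq> y" using assms unfolding card_2_iff by blast
  define w where "w z = (if z = x then y else if z = y then x else z)" for z
  have w: "w \<in> FI A" unfolding FI_iff A w_def using xy by auto
  have uniq: "s = w" if "s \<in> FI A" for s
  proof (rule ext)
    fix z
    have h: "\<forall>z. z \<notin> A \<longrightarrow> s z = z" "\<forall>z\<in>A. s z \<noteq> z" "\<forall>z. s (s z) = z" using that unfolding FI_iff by auto
    have "s x = y" using FI_in[OF that, of x] h(2) A by auto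
    moreover have "s y = x" using FI_in[OF that, of y] h(2) A by auto
    moreover have "z \<noteq> x \<Longrightarrow> z \<noteq> y \<Longrightarrow> s z = z" using h(1) A by simp
    ultimately show "s z = w z" unfolding w_def by auto
  qed
  have r: "(x, y) \<in> RR w w" "(y, x) \<in> RR w w" using xy by (auto simp: w_def)
  have c: "conn A w w" unfolding conn_def A
    using r by (auto intro: r_into_rtrancl)
  have "PP A = {(w, w)}"
  proof
    show "PP A \<subseteq> {(w, w)}" unfolding PP_def using uniq by blast
    show "{(w, w)} \<subseteq> PP A" unfolding PP_def using w c by blast
  qed
  then show ?thesis by simp
qed

fun cc :: "nat \<Rightarrow> nat" where
  "cc 0 = 1" | "cc (Suc k) = (if k = 0 then 1 else (2*k+1) * (2*k) * cc k)"

lemma cc_pos: "cc k > 0" by (induction k) auto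

lemma PP_card: "finite A \<Longrightarrow> card A = 2*k \<Longrightarrow> k \<ge> 1 \<Longrightarrow> card (PP A) = cc k"
proof (induction k arbitrary: A)
  case 0 then show ?case by simp
next
  case (Suc k)
  show ?case
  proof (cases "k = 0")
    case True then show ?thesis using PP_two Suc.prems by simp
  next
    case False
    obtain m where m: "m \<in> A" using Suc.prems by fastforce
    have c3: "card A \<ge> 3" using Suc.prems False by simp
    have IH: "card (PP (A - {m,a})) = cc k" if "a \<in> A - {m}" for a
      using Suc.prems that m False by (intro Suc.IH) (auto simp: card_Diff_subset)
    have fin: "finite (PP (A - {m,a}))" if "a \<in> A - {m}" for a
      using IH[OF that] cc_pos card_ge_0_finite by metis
    have cA: "card (A - {m, a}) = 2 * k" if "a \<in> A - {m}" for a
      using Suc.prems that m by (auto simp: card_Diff_subset)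
    have "card (PP A) = card (SIGMA a:A-{m}. (A - {m,a}) \<times> PP (A - {m,a}))"
      using bij_betw_same_card[OF PP_bij[OF Suc.prems(1) m c3]] .
    also have "\<dots> = (\<Sum>a\<in>A-{m}. card ((A - {m,a}) \<times> PP (A - {m,a})))"
      using Suc.prems fin by (intro card_SigmaI) auto
    also have "\<dots> = (\<Sum>a\<in>A-{m}. 2 * k * cc k)"
      using IH cA by (intro sum.cong) (auto simp: card_cartesian_product)
    also have "\<dots> = (2*k+1) * (2 * k * cc k)" using Suc.prems m by simp
    finally show ?thesis using False by (simp add: algebra_simps)
  qed
qed



lemma fpf_eq: "fpf_involutions n = FI {0..<n}"
  unfolding fpf_involutions_def FI_def by auto

lemma FI_inv: "s \<in> FI A \<Longrightarrow> inv s = s"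
proof (rule ext)
  fix x assume s: "s \<in> FI A"
  then have p: "s permutes A" unfolding FI_def by auto
  have i: "\<forall>x. s (s x) = x" using s unfolding FI_iff by auto
  show "inv s x = s x" using permutes_inv_eq[OF p] i by metis
qed

lemma gg1:
  assumes s: "s \<in> FI A" and t: "t \<in> FI A" and g: "g \<in> generated_group {s, t}"
  shows "(x, g x) \<in> (RR s t)\<^sup>*"
  using g
proof (induction rule: generated_group.induct)
  case gen_id then show ?case by simp
next
  case (gen_mult g u)
  have "(g x, u (g x)) \<in> RR s t" using gen_mult.hyps(2) by auto
  then show ?case using gen_mult.IH by (simp add: rtrancl.rtrancl_into_rtrancl)
next
  case (gen_inv g u)
  have "inv u = u" using gen_inv.hyps(2) FI_inv s t by auto
  moreover have "(g x, u (g x)) \<in> RR s t" using gen_inv.hyps(2) by auto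
  ultimately show ?case using gen_inv.IH by (simp add: rtrancl.rtrancl_into_rtrancl)
qed

lemma gg2:
  assumes "(x, y) \<in> (RR s t)\<^sup>*"
  shows "\<exists>g\<in>generated_group {s, t}. g x = y"
  using assms
proof (induction rule: rtrancl_induct)
  case base
  have "id \<in> generated_group {s, t}" by (rule generated_group.gen_id)
  then show ?case by (metis id_apply)
next
  case (step y z)
  then obtain g where g: "g \<in> generated_group {s, t}" "g x = y" by blast
  from step.hyps(2) have "z = s y \<or> z = t y" by simp
  then show ?case
  proof
    assume "z = s y"
    then show ?thesis using generated_group.gen_mult[OF g(1), of s] g(2) by (intro bexI[of _ "s \<circ> g"]) auto
  next
    assume "z = t y"
    then show ?thesis using generated_group.gen_mult[OF g(1), of t] g(2) by (intro bexI[of _ "t \<circ> g"]) auto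
  qed
qed

lemma trans_iff:
  assumes "s \<in> FI {0..<n}" "t \<in> FI {0..<n}"
  shows "transitive_on n (generated_group {s, t}) \<longleftrightarrow> conn {0..<n} s t"
proof
  assume h: "transitive_on n (generated_group {s, t})"
  show "conn {0..<n} s t" unfolding conn_def
  proof (intro ballI)
    fix x y assume "x \<in> {0..<n}" "y \<in> {0..<n}"
    then obtain g where "g \<in> generated_group {s, t}" "g x = y" using h unfolding transitive_on_def by auto
    then show "(x, y) \<in> (RR s t)\<^sup>*" using gg1[OF assms] by metis
  qed
next
  assume h: "conn {0..<n} s t"
  show "transitive_on n (generated_group {s, t})" unfolding transitive_on_def
  proof (intro allI impI)
    fix x y assume "x < n" "y < n"
    then have "(x, y) \<in> (RR s t)\<^sup>*" using h unfolding conn_def by auto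
    then show "\<exists>g\<in>generated_group {s, t}. g x = y" using gg2 by metis
  qed
qed

lemma p_trans_eq: "k \<ge> 1 \<Longrightarrow> p_trans k = real (cc k) / (real (ff k))^2"
proof -
  assume k: "k \<ge> 1"
  have "{(s, t). s \<in> fpf_involutions (2*k) \<and> t \<in> fpf_involutions (2*k)
        \<and> transitive_on (2*k) (generated_group {s, t})} = PP {0..<2*k}"
    unfolding PP_def fpf_eq using trans_iff by auto
  then show ?thesis unfolding p_trans_def fpf_eq using PP_card[of "{0..<2*k}" k] FI_card[of "{0..<2*k}" k] k
    by simp
qed

lemma l1: assumes "F > 0" "K \<ge> 1" shows "((2*K+1)*(2*K)*(A::real)) / ((2*K+1)*F)^2 = A/F^2 * (2*K/(2*K+1))"
proof -
  have a: "2*K+1 > 0" "F^2 > 0" using assms by auto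
  show ?thesis using a by (simp add: divide_simps power2_eq_square)
qed
lemma l2: assumes "K \<ge> (1::real)" shows "(1/K) * (4*K^2 / (2*K+1)^2) \<le> 1 / (K+1)"
proof -
  have a: "2*K+1 > 0" "K > 0" "K + 1 > 0" using assms by auto
  show ?thesis using a by (simp add: divide_simps power2_eq_square) (simp add: algebra_simps)
qed
lemma l3: assumes "K \<ge> (1::real)" shows "1 / (2*(K+1) - 1) \<le> (1/(2*K-1)) * (4*K^2 / (2*K+1)^2)"
proof -
  have a: "2*K+1 > 0" "2*K - 1 > 0" "2*(K+1) - 1 > 0" using assms by auto
  show ?thesis using a by (simp add: divide_simps power2_eq_square) (simp add: algebra_simps)
qed

definition q :: "nat \<Rightarrow> real" where "q k = real (cc k) / (real (ff k))^2"

lemma q_rec: "k \<ge> 1 \<Longrightarrow> q (Suc k) = q k * (2 * real k / (2 * real k + 1))"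
proof -
  assume k: "k \<ge> 1"
  have f: "real (ff k) > 0" using ff_pos by simp
  have e1: "real (cc (Suc k)) = (2*real k+1)*(2*real k)*real (cc k)" using k by (simp add: algebra_simps)
  have e2: "real (ff (Suc k)) = (2*real k+1)*real (ff k)" by (simp add: algebra_simps)
  show ?thesis unfolding q_def e1 e2
    by (rule l1) (use f k in auto)
qed

lemma q_bounds: "k \<ge> 1 \<Longrightarrow> q k > 0 \<and> (q k)^2 \<le> 1 / real k \<and> 1 / (2 * real k - 1) \<le> (q k)^2"
proof (induction k rule: nat_induct_at_least)
  case base
  then show ?case by (simp add: q_def)
next
  case (Suc k)
  have k: "real k \<ge> 1" using Suc by simp
  define K where "K = real k"
  have kK: "K \<ge> 1" using k K_def by simp
  have e: "(q (Suc k))^2 = (q k)^2 * (4*K^2 / (2*K+1)^2)"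
    using q_rec[OF Suc(1)] unfolding K_def by (simp add: power_mult_distrib power_divide)
  have pos: "q (Suc k) > 0" using q_rec[OF Suc(1)] Suc k by simp
  have sK: "real (Suc k) = K + 1" unfolding K_def by simp
  have up: "(q (Suc k))^2 \<le> 1 / real (Suc k)"
  proof -
    have "(q (Suc k))^2 \<le> (1/K) * (4*K^2 / (2*K+1)^2)"
      unfolding e using Suc unfolding K_def by (intro mult_right_mono) auto
    also have "\<dots> \<le> 1 / (K + 1)" by (rule l2[OF kK])
    finally show ?thesis unfolding sK .
  qed
  have lo: "1 / (2 * real (Suc k) - 1) \<le> (q (Suc k))^2"
  proof -
    have "1 / (2 * (K + 1) - 1) \<le> (1/(2*K-1)) * (4*K^2 / (2*K+1)^2)"
      by (rule l3[OF kK])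
    also have "\<dots> \<le> (q (Suc k))^2"
      unfolding e using Suc unfolding K_def by (intro mult_right_mono) auto
    finally show ?thesis unfolding sK .
  qed
  show ?case using pos up lo by simp
qed

lemma main_bounds:
  assumes k: "k \<ge> 1"
  shows "1/2 * real k powr (-1/2) \<le> p_trans k \<and> p_trans k \<le> 1 * real k powr (-1/2)"
proof -
  have kr: "real k \<ge> 1" using k by simp
  have pw: "real k powr (-1/2) = 1 / sqrt k"
    using kr by (simp add: powr_minus_divide powr_half_sqrt[symmetric])
  have pq: "p_trans k = q k" using p_trans_eq[OF k] unfolding q_def .
  note b = q_bounds[OF k]
  have sq: "(sqrt (real k))^2 = real k" using kr by simp
  have sp: "sqrt (real k) > 0" using kr by simp
  have up: "q k \<le> 1 / sqrt k"
  proof (rule power2_le_imp_le)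
    show "(q k)^2 \<le> (1 / sqrt (real k))^2" using b sq by (simp add: power_divide)
    show "0 \<le> 1 / sqrt (real k)" using sp by simp
  qed
  have lo: "1/2 * (1 / sqrt k) \<le> q k"
  proof (rule power2_le_imp_le)
    have "(1/2 * (1 / sqrt (real k)))^2 = 1 / (4 * k)" using sq by (simp add: power_divide power_mult_distrib)
    also have "\<dots> \<le> 1 / (2 * real k - 1)" using kr by (simp add: field_simps)
    also have "\<dots> \<le> (q k)^2" using b by simp
    finally show "(1/2 * (1 / sqrt (real k)))^2 \<le> (q k)^2" .
    show "0 \<le> q k" using b by simp
  qed
  show ?thesis unfolding pw pq using up lo by simp
qed

theorem lemma2p1:
  shows "\<exists>a b :: real. 0 < a \<and> a < b \<and>
    (\<forall>k::nat. k \<ge> 1 \<longrightarrow>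
       a * real k powr (-1/2) \<le> p_trans k \<and> p_trans k \<le> b * real k powr (-1/2))"
  using main_bounds by (intro exI[of _ "1/2"] exI[of _ 1]) auto


end
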